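(* Let $\partial$ and $\partial'$ be $(A,B)$-equivalent $M_{A,B}$-differentials. Then the set of all $\partial$-trivial elements coincides with the set of all $\partial'$-trivial elements.
   Context: $\mathbb E$ is a field. $A=\{a_1\prec\dots\prec a_N\}$ is a finite linearly ordered set with a grading $\deg:A\to\mathbb Z$; $\mathbb E(A)$ is the graded vector space with basis $A$. An $M$-differential is a linear map $\partial:\mathbb E(A)\to\mathbb E(A)$ of degree $-1$ with $\partial^2=0$ and $\partial(a_i)\in\mathrm{span}\{a_1,\dots,a_{i-1}\}$ for all $i$. For $B\subset A$ with $\partial(\mathbb E(B))\subset\mathbb E(B)$, $\partial$ is called an $M_{A,B}$-differential. $\mathrm{Aut}_T(A,B)$ is the group of graded linear automorphisms $g$ of $\mathbb E(A)$ preserving each subspace $\mathrm{span}\{a_1,\dots,a_i\}$ and with $g(\mathbb E(B))=\mathbb E(B)$. Two $M_{A,B}$-differentials are $(A,B)$-equivalent if $\partial_2=g\partial_1g^{-1}$ for some $g\in\mathrm{Aut}_T(A,B)$. An element $a_k\in B$ is $\partial$-trivial if $k<N$, $a_{k+1}\in A\setminus B$, and $a_k$ appears with nonzero coefficient in the expansion of $\partial(a_{k+1})$ in the basis $A$. *)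

theory Defs
  imports "Jordan_Normal_Form.Matrix"
begin

(* Conventions: A = {a_1 < ... < a_N} is encoded by the indices 0..<N (index i
   stands for a_(i+1)); the grading is deg :: nat => int (only values on 0..<N
   matter); B is a set of indices, B \<subseteq> {0..<N}.
   E(A) = carrier_vec N, a vector v has coordinate v$i at basis element i.
   A linear map of E(A) is its N x N matrix M w.r.t. the basis A:
   M $$ (i,j) = coefficient of basis element i in M(basis element j). *)

definition EB :: "nat \<Rightarrow> nat set \<Rightarrow> 'k::field vec set" where
  "EB N B = {v \<in> carrier_vec N. \<forall>i<N. i \<notin> B \<longrightarrow> v $ i = 0}"

(* span{a_1,...,a_i} = vectors supported on the indices 0..<i *)
definition flag_sub :: "nat \<Rightarrow> nat \<Rightarrow> 'k::field vec set" where
  "flag_sub N i = {v \<in> carrier_vec N. \<forall>k<N. i \<le> k \<longrightarrow> v $ k = 0}"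

definition M_differential :: "nat \<Rightarrow> (nat \<Rightarrow> int) \<Rightarrow> 'k::field mat \<Rightarrow> bool" where
  "M_differential N deg D \<longleftrightarrow>
     D \<in> carrier_mat N N \<and>
     (\<forall>i<N. \<forall>j<N. D $$ (i,j) \<noteq> 0 \<longrightarrow> deg i = deg j - 1) \<and>
     D * D = 0\<^sub>m N N \<and>
     (\<forall>i<N. \<forall>j<N. D $$ (i,j) \<noteq> 0 \<longrightarrow> i < j)"

definition MAB_differential ::
  "nat \<Rightarrow> (nat \<Rightarrow> int) \<Rightarrow> nat set \<Rightarrow> 'k::field mat \<Rightarrow> bool" where
  "MAB_differential N deg B D \<longleftrightarrow>
     M_differential N deg D \<and> (\<forall>v \<in> EB N B. D *\<^sub>v v \<in> EB N B)"

definition AutT :: "nat \<Rightarrow> (nat \<Rightarrow> int) \<Rightarrow> nat set \<Rightarrow> 'k::field mat set" where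
  "AutT N deg B = {g. g \<in> carrier_mat N N \<and> invertible_mat g \<and>
     (\<forall>i<N. \<forall>j<N. g $$ (i,j) \<noteq> 0 \<longrightarrow> deg i = deg j) \<and>
     (\<forall>i\<le>N. (\<lambda>v. g *\<^sub>v v) ` flag_sub N i = flag_sub N i) \<and>
     (\<lambda>v. g *\<^sub>v v) ` EB N B = EB N B}"

definition AB_equivalent ::
  "nat \<Rightarrow> (nat \<Rightarrow> int) \<Rightarrow> nat set \<Rightarrow> 'k::field mat \<Rightarrow> 'k mat \<Rightarrow> bool" where
  "AB_equivalent N deg B D1 D2 \<longleftrightarrow>
     (\<exists>g \<in> AutT N deg B. \<exists>h \<in> carrier_mat N N.
        g * h = 1\<^sub>m N \<and> h * g = 1\<^sub>m N \<and> D2 = g * D1 * h)"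

definition trivial_elems :: "nat \<Rightarrow> nat set \<Rightarrow> 'k::field mat \<Rightarrow> nat set" where
  "trivial_elems N B D = {k \<in> B. k + 1 < N \<and> k + 1 \<notin> B \<and> D $$ (k, k+1) \<noteq> 0}"

end

theory Submission
  imports Defs
begin

lemma sum_single:
  assumes "finite S" "a \<in> S" "\<And>x. x \<in> S \<Longrightarrow> x \<noteq> a \<Longrightarrow> f x = 0"
  shows "sum f S = f a"
proof -
  have "sum f S = f a + sum f (S - {a})" using assms by (simp add: sum.remove)
  also have "sum f (S - {a}) = 0" using assms by (intro sum.neutral) auto
  finally show ?thesis by simp
qed

lemma mat_unit_idx:
  fixes g :: "'k::field mat"
  assumes g: "g \<in> carrier_mat N N" and "i < N" "j < N"
  shows "(g *\<^sub>v unit_vec N j) $ i = g $$ (i,j)"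
proof -
  have "(g *\<^sub>v unit_vec N j) $ i = (\<Sum>l\<in>{0..<N}. row g i $ l * unit_vec N j $ l)"
    using assms by (simp add: scalar_prod_def)
  also have "\<dots> = row g i $ j * unit_vec N j $ j"
    using assms by (intro sum_single) auto
  finally show ?thesis using assms by simp
qed

lemma upper_of_flag:
  fixes g :: "'k::field mat"
  assumes g: "g \<in> carrier_mat N N"
    and fl: "\<forall>i\<le>N. (\<lambda>v. g *\<^sub>v v) ` flag_sub N i \<subseteq> flag_sub N i"
    and iN: "i < N" and jN: "j < N" and ji: "j < i"
  shows "g $$ (i,j) = 0"
proof -
  have u: "unit_vec N j \<in> flag_sub N (j+1)"
    unfolding flag_sub_def by (simp add: unit_vec_def)
  have "Suc j \<le> N" using jN by simp
  hence "(\<lambda>v. g *\<^sub>v v) ` flag_sub N (j+1) \<subseteq> flag_sub N (j+1)" using fl by simp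
  hence "g *\<^sub>v unit_vec N j \<in> flag_sub N (j+1)" using u by blast
  hence "(g *\<^sub>v unit_vec N j) $ i = 0" using iN ji unfolding flag_sub_def by simp
  thus ?thesis using mat_unit_idx[OF g iN jN] by simp
qed

lemma inv_flag:
  fixes g :: "'k::field mat"
  assumes g: "g \<in> carrier_mat N N" and h: "h \<in> carrier_mat N N"
    and hg: "h * g = 1\<^sub>m N"
    and fl: "\<forall>i\<le>N. (\<lambda>v. g *\<^sub>v v) ` flag_sub N i = flag_sub N i"
  shows "\<forall>i\<le>N. (\<lambda>v. h *\<^sub>v v) ` flag_sub N i \<subseteq> flag_sub N i"
proof (intro allI impI subsetI)
  fix i x assume i: "i \<le> N" and "x \<in> (\<lambda>v. h *\<^sub>v v) ` flag_sub N i"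
  then obtain v where v: "v \<in> flag_sub N i" "x = h *\<^sub>v v" by auto
  then obtain w where w: "w \<in> flag_sub N i" "v = g *\<^sub>v w" using fl i by blast
  have wc: "w \<in> carrier_vec N" using w by (auto simp: flag_sub_def)
  have "x = (h * g) *\<^sub>v w" using v w g h wc by simp
  also have "\<dots> = w" using hg wc by simp
  finally show "x \<in> flag_sub N i" using w by simp
qed

lemma diag_nonzero:
  fixes g :: "'k::field mat"
  assumes g: "g \<in> carrier_mat N N" and h: "h \<in> carrier_mat N N"
    and gh: "g * h = 1\<^sub>m N"
    and ug: "\<And>i j. i < N \<Longrightarrow> j < N \<Longrightarrow> j < i \<Longrightarrow> g $$ (i,j) = 0"
    and uh: "\<And>i j. i < N \<Longrightarrow> j < N \<Longrightarrow> j < i \<Longrightarrow> h $$ (i,j) = 0"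
    and k: "k < N"
  shows "g $$ (k,k) * h $$ (k,k) = 1"
proof -
  have "1 = (g * h) $$ (k,k)" using gh k by simp
  also have "\<dots> = (\<Sum>l\<in>{0..<N}. row g k $ l * col h k $ l)"
    using g h k by (simp add: scalar_prod_def)
  also have "\<dots> = row g k $ k * col h k $ k"
  proof (rule sum_single)
    fix l assume "l \<in> {0..<N}" "l \<noteq> k"
    then show "row g k $ l * col h k $ l = 0"
      using ug[of k l] uh[of l k] g h k by (cases "l < k") auto
  qed (use k in auto)
  finally show ?thesis using g h k by simp
qed

lemma entry_conj:
  fixes g :: "'k::field mat"
  assumes g: "g \<in> carrier_mat N N" and h: "h \<in> carrier_mat N N"
    and D: "D \<in> carrier_mat N N"
    and ug: "\<And>i j. i < N \<Longrightarrow> j < N \<Longrightarrow> j < i \<Longrightarrow> g $$ (i,j) = 0"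
    and uh: "\<And>i j. i < N \<Longrightarrow> j < N \<Longrightarrow> j < i \<Longrightarrow> h $$ (i,j) = 0"
    and uD: "\<And>i j. i < N \<Longrightarrow> j < N \<Longrightarrow> D $$ (i,j) \<noteq> 0 \<Longrightarrow> i < j"
    and k: "k + 1 < N"
  shows "(g * D * h) $$ (k,k+1) = g $$ (k,k) * D $$ (k,k+1) * h $$ (k+1,k+1)"
proof -
  have gD: "\<And>j. j < N \<Longrightarrow> j \<le> k + 1 \<Longrightarrow>
      (g * D) $$ (k,j) = (if j = k + 1 then g $$ (k,k) * D $$ (k,k+1) else 0)"
  proof -
    fix j assume j: "j < N" "j \<le> k + 1"
    have "(g * D) $$ (k,j) = (\<Sum>l\<in>{0..<N}. row g k $ l * col D j $ l)"
      using g D j k by (simp add: scalar_prod_def)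
    also have "\<dots> = row g k $ k * col D j $ k"
    proof (rule sum_single)
      fix l assume l: "l \<in> {0..<N}" "l \<noteq> k"
      show "row g k $ l * col D j $ l = 0"
      proof (cases "l < k")
        case True thus ?thesis using ug[of k l] g D j k l by auto
      next
        case False
        hence "\<not> l < j" using l j by auto
        hence "D $$ (l,j) = 0" using uD[of l j] l j by auto
        thus ?thesis using g D j k l by auto
      qed
    qed (use k in auto)
    also have "\<dots> = g $$ (k,k) * D $$ (k,j)" using g D j k by simp
    finally have "(g * D) $$ (k,j) = g $$ (k,k) * D $$ (k,j)" .
    then show "(g * D) $$ (k,j) = (if j = k + 1 then g $$ (k,k) * D $$ (k,k+1) else 0)"
    proof (cases "j = k + 1")
      case False
      hence "D $$ (k,j) = 0" using uD[of k j] j k by fastforce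
      thus ?thesis using False \<open>(g * D) $$ (k,j) = g $$ (k,k) * D $$ (k,j)\<close> by simp
    qed simp
  qed
  have gDc: "g * D \<in> carrier_mat N N" using g D by simp
  have "(g * D * h) $$ (k,k+1) = (\<Sum>j\<in>{0..<N}. row (g * D) k $ j * col h (k+1) $ j)"
  proof -
    have "(g * D * h) $$ (k,k+1) = row (g * D) k \<bullet> col h (k+1)"
      using gDc h k by (intro index_mult_mat(1)) auto
    thus ?thesis using h k unfolding scalar_prod_def by simp
  qed
  also have "\<dots> = row (g * D) k $ (k+1) * col h (k+1) $ (k+1)"
  proof (rule sum_single)
    fix j assume j: "j \<in> {0..<N}" "j \<noteq> k + 1"
    show "row (g * D) k $ j * col h (k+1) $ j = 0"
    proof (cases "j \<le> k + 1")
      case True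
      have jN: "j < N" using j by simp
      have "row (g * D) k $ j = (g * D) $$ (k,j)" using gDc jN k by (intro index_row(1)) auto
      thus ?thesis using gD[of j] True jN j by auto
    next
      case False thus ?thesis using uh[of j "k+1"] j gDc h k by auto
    qed
  qed (use k in auto)
  also have "\<dots> = g $$ (k,k) * D $$ (k,k+1) * h $$ (k+1,k+1)"
  proof -
    have "row (g * D) k $ (k+1) = (g * D) $$ (k,k+1)" using gDc k by (intro index_row(1)) auto
    thus ?thesis using gD[of "k+1"] gDc h k by simp
  qed
  finally show ?thesis .
qed

theorem lemma2p1:
  fixes N :: nat and deg :: "nat \<Rightarrow> int" and B :: "nat set"
    and D1 D2 :: "'k::field mat"
  assumes "B \<subseteq> {0..<N}"
    and "MAB_differential N deg B D1"
    and "MAB_differential N deg B D2"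
    and "AB_equivalent N deg B D1 D2"
  shows "trivial_elems N B D1 = trivial_elems N B D2"
proof -
  obtain g h where g: "g \<in> AutT N deg B" and h: "h \<in> carrier_mat N N"
    and gh: "g * h = 1\<^sub>m N" and hg: "h * g = 1\<^sub>m N" and D2: "D2 = g * D1 * h"
    using assms(4) unfolding AB_equivalent_def by blast
  have gc: "g \<in> carrier_mat N N" and fl: "\<forall>i\<le>N. (\<lambda>v. g *\<^sub>v v) ` flag_sub N i = flag_sub N i"
    using g by (auto simp: AutT_def)
  have D1c: "D1 \<in> carrier_mat N N"
    and uD: "\<And>i j. i < N \<Longrightarrow> j < N \<Longrightarrow> D1 $$ (i,j) \<noteq> 0 \<Longrightarrow> i < j"
    using assms(2) by (auto simp: MAB_differential_def M_differential_def)
  have ug: "\<And>i j. i < N \<Longrightarrow> j < N \<Longrightarrow> j < i \<Longrightarrow> g $$ (i,j) = 0"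
    using upper_of_flag[OF gc] fl by blast
  have uh: "\<And>i j. i < N \<Longrightarrow> j < N \<Longrightarrow> j < i \<Longrightarrow> h $$ (i,j) = 0"
    using upper_of_flag[OF h inv_flag[OF gc h hg fl]] by blast
  have key: "\<And>k. k + 1 < N \<Longrightarrow> (D2 $$ (k,k+1) \<noteq> 0) = (D1 $$ (k,k+1) \<noteq> 0)"
  proof -
    fix k assume k: "k + 1 < N"
    have e: "D2 $$ (k,k+1) = g $$ (k,k) * D1 $$ (k,k+1) * h $$ (k+1,k+1)"
      using entry_conj[OF gc h D1c ug uh uD k] D2 by simp
    have "g $$ (k,k) * h $$ (k,k) = 1" using diag_nonzero[OF gc h gh ug uh] k by simp
    hence "g $$ (k,k) \<noteq> 0" by auto
    moreover have "g $$ (k+1,k+1) * h $$ (k+1,k+1) = 1"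
      using diag_nonzero[OF gc h gh ug uh] k by simp
    hence "h $$ (k+1,k+1) \<noteq> 0" by auto
    ultimately show "(D2 $$ (k,k+1) \<noteq> 0) = (D1 $$ (k,k+1) \<noteq> 0)" using e by simp
  qed
  show ?thesis unfolding trivial_elems_def using key by blast
qed

end
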